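(* Let $\mathcal{M}\subset\mathbb{R}^n$ be a locally symmetric $C^2$ submanifold. If for some $\bar x\in\mathcal{M}$, $\sigma\in\Sigma^n$ and $\delta>0$ we have $\mathcal{M}\cap B(\bar x,\delta)\subseteq\Delta(\sigma)$, then $\mathcal{M}\subseteq\Delta(\sigma)^{\perp\perp}$.
   Context: $\Sigma^n$ permutations of $\mathbb{N}_n$ acting by $(\sigma x)_i=x_{\sigma^{-1}(i)}$; $P(\sigma)$ orbit partition; $P(x)$ partition in which $i,j$ share a set iff $x_i=x_j$; $\Delta(\sigma)=\{x:P(x)=P(\sigma)\}$; $\Delta(\sigma)^{\perp\perp}=\{x:x_i=x_j$ whenever $i,j$ lie in the same set of $P(\sigma)\}$. $\mathbb{R}^n_\ge=\{x:x_1\ge\cdots\ge x_n\}$; $B$ open ball. A set $S$ is locally symmetric if $S\cap\mathbb{R}^n_\ge\ne\emptyset$ and each $x\in S$ has $\delta>0$ with $\sigma(S\cap B(x,\delta))=S\cap B(x,\delta)$ for all $y\in S\cap B(x,\delta)$, all $\sigma$ with $\sigma y=y$. A locally symmetric $C^2$ submanifold is a connected $C^2$ submanifold without boundary which is a locally symmetric set. *)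

theory Defs
  imports "HOL-Analysis.Analysis" "HOL-Combinatorics.Orbits" "HOL-Combinatorics.Permutations"
begin

text \<open>Vectors in R^n are rendered as real^'n, the index type 'n being finite and
  linearly ordered (the order plays the role of the order on {1..n}).\<close>

definition perm_act :: "('n::finite \<Rightarrow> 'n) \<Rightarrow> real^'n \<Rightarrow> real^'n" where
  "perm_act \<sigma> x = (\<chi> i. x $ (inv \<sigma> i))"

definition orbit_partition :: "('n::finite \<Rightarrow> 'n) \<Rightarrow> 'n set set" where
  "orbit_partition \<sigma> = {orbit \<sigma> i | i. True}"

definition vec_partition :: "real^'n \<Rightarrow> 'n set set" where
  "vec_partition x = {{j. x $ j = x $ i} | i. True}"

definition Delta :: "('n::finite \<Rightarrow> 'n) \<Rightarrow> (real^'n) set" where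
  "Delta \<sigma> = {x. vec_partition x = orbit_partition \<sigma>}"

definition Delta_perp_perp :: "('n::finite \<Rightarrow> 'n) \<Rightarrow> (real^'n) set" where
  "Delta_perp_perp \<sigma> = {x. \<forall>A\<in>orbit_partition \<sigma>. \<forall>i\<in>A. \<forall>j\<in>A. x $ i = x $ j}"

definition ordered_cone :: "(real^'n::{finite,linorder}) set" where
  "ordered_cone = {x. \<forall>i j. i \<le> j \<longrightarrow> x $ j \<le> x $ i}"

definition locally_symmetric :: "(real^'n::{finite,linorder}) set \<Rightarrow> bool" where
  "locally_symmetric S \<longleftrightarrow> S \<inter> ordered_cone \<noteq> {} \<and>
     (\<forall>x\<in>S. \<exists>\<delta>>0. \<forall>y\<in>S \<inter> ball x \<delta>. \<forall>\<sigma>. \<sigma> permutes UNIV \<and> perm_act \<sigma> y = y \<longrightarrow>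
        perm_act \<sigma> ` (S \<inter> ball x \<delta>) = S \<inter> ball x \<delta>)"

definition C2_on :: "(real^'n::finite) set \<Rightarrow> (real^'n \<Rightarrow> real^'n) \<Rightarrow> bool" where
  "C2_on U f \<longleftrightarrow> (\<exists>f' :: real^'n \<Rightarrow> ((real^'n) \<Rightarrow>\<^sub>L (real^'n)).
      \<exists>f'' :: real^'n \<Rightarrow> ((real^'n) \<Rightarrow>\<^sub>L ((real^'n) \<Rightarrow>\<^sub>L (real^'n))).
      (\<forall>x\<in>U. (f has_derivative blinfun_apply (f' x)) (at x)) \<and>
      (\<forall>x\<in>U. (f' has_derivative blinfun_apply (f'' x)) (at x)) \<and>
      continuous_on U f'')"

definition C2_submanifold :: "(real^'n::finite) set \<Rightarrow> bool" where
  "C2_submanifold M \<longleftrightarrow> (\<forall>x\<in>M. \<exists>U V \<phi> \<psi> L.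
      open U \<and> x \<in> U \<and> open V \<and> subspace L \<and>
      \<phi> ` U = V \<and> \<psi> ` V = U \<and> (\<forall>u\<in>U. \<psi> (\<phi> u) = u) \<and> (\<forall>v\<in>V. \<phi> (\<psi> v) = v) \<and>
      C2_on U \<phi> \<and> C2_on V \<psi> \<and> \<phi> ` (M \<inter> U) = V \<inter> L)"

definition locally_symmetric_C2_submanifold :: "(real^'n::{finite,linorder}) set \<Rightarrow> bool" where
  "locally_symmetric_C2_submanifold M \<longleftrightarrow>
     connected M \<and> C2_submanifold M \<and> locally_symmetric M"

end

theory Submission
  imports Defs "HOL-Combinatorics.Cycles"
begin

lemma perm_act_linear: "linear (perm_act \<sigma>)"
  by (rule linearI) (auto simp: perm_act_def vec_eq_iff)

lemma perm_act_funpow: "((perm_act \<sigma>) ^^ n) x $ i = x $ ((inv \<sigma> ^^ n) i)"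
proof (induction n arbitrary: i)
  case 0 then show ?case by simp
next
  case (Suc n)
  have "((perm_act \<sigma>) ^^ Suc n) x $ i = ((perm_act \<sigma>) ^^ n) x $ (inv \<sigma> i)"
    by (simp add: perm_act_def)
  also have "\<dots> = x $ ((inv \<sigma> ^^ n) (inv \<sigma> i))" by (rule Suc)
  also have "\<dots> = x $ ((inv \<sigma> ^^ Suc n) i)" by (simp only: funpow_Suc_right o_apply)
  finally show ?case .
qed

lemma perm_act_nilpotent:
  fixes \<sigma> :: "'n::finite \<Rightarrow> 'n"
  assumes "\<sigma> permutes UNIV"
  obtains k where "k > 0" "(perm_act \<sigma>) ^^ k = id"
proof -
  have "inv \<sigma> permutes UNIV" using assms by (rule permutes_inv)
  then have "permutation (inv \<sigma>)" by (intro permutes_imp_permutation) auto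
  then obtain k where k: "(inv \<sigma>) ^^ k = id" "k > 0" by (rule permutation_is_nilpotent)
  have "(perm_act \<sigma>) ^^ k = id"
    by (rule ext) (simp add: vec_eq_iff perm_act_funpow k)
  with k show ?thesis using that by blast
qed

lemma Dpp_char:
  fixes \<sigma> :: "'n::finite \<Rightarrow> 'n"
  assumes "\<sigma> permutes UNIV"
  shows "x \<in> Delta_perp_perp \<sigma> \<longleftrightarrow> perm_act \<sigma> x = x"
proof
  have perm: "permutation \<sigma>" using assms by (intro permutes_imp_permutation) auto
  assume x: "x \<in> Delta_perp_perp \<sigma>"
  show "perm_act \<sigma> x = x"
  proof (subst vec_eq_iff, intro allI)
    fix i
    have A: "orbit \<sigma> (inv \<sigma> i) \<in> orbit_partition \<sigma>" by (auto simp: orbit_partition_def)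
    have "\<sigma> (inv \<sigma> i) = i" using assms by (simp add: permutes_inverses(1))
    then have "i \<in> orbit \<sigma> (inv \<sigma> i)" using orbit.base[of \<sigma> "inv \<sigma> i"] by simp
    moreover have "inv \<sigma> i \<in> orbit \<sigma> (inv \<sigma> i)" by (rule permutation_self_in_orbit[OF perm])
    ultimately have "x $ (inv \<sigma> i) = x $ i"
      using x A unfolding Delta_perp_perp_def by blast
    then show "perm_act \<sigma> x $ i = x $ i"
      unfolding perm_act_def by simp
  qed
next
  assume fx: "perm_act \<sigma> x = x"
  have step: "x $ (\<sigma> j) = x $ j" for j
  proof -
    have "perm_act \<sigma> x $ (\<sigma> j) = x $ (\<sigma> j)" using fx by simp
    moreover have "inv \<sigma> (\<sigma> j) = j" using assms by (simp add: permutes_inverses(2))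
    ultimately show ?thesis by (simp add: perm_act_def)
  qed
  have orb: "y \<in> orbit \<sigma> a \<Longrightarrow> x $ y = x $ a" for y a
    by (induction rule: orbit.induct) (auto simp: step)
  show "x \<in> Delta_perp_perp \<sigma>"
    unfolding Delta_perp_perp_def
  proof (intro CollectI ballI)
    fix A i j assume "A \<in> orbit_partition \<sigma>" "i \<in> A" "j \<in> A"
    then obtain a where "A = orbit \<sigma> a" "i \<in> orbit \<sigma> a" "j \<in> orbit \<sigma> a"
      unfolding orbit_partition_def by blast
    then show "x $ i = x $ j" using orb by metis
  qed
qed

lemma Delta_sub:
  fixes \<sigma> :: "'n::finite \<Rightarrow> 'n"
  assumes "\<sigma> permutes UNIV"
  shows "Delta \<sigma> \<subseteq> Delta_perp_perp \<sigma>"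
proof
  have perm: "permutation \<sigma>" using assms by (intro permutes_imp_permutation) auto
  fix x assume "x \<in> Delta \<sigma>"
  then have eq: "vec_partition x = orbit_partition \<sigma>" by (simp add: Delta_def)
  show "x \<in> Delta_perp_perp \<sigma>"
    unfolding Delta_perp_perp_def
  proof (intro CollectI ballI)
    fix A i j assume A: "A \<in> orbit_partition \<sigma>" and i: "i \<in> A" and j: "j \<in> A"
    then have "A \<in> vec_partition x" using eq by simp
    then obtain i0 where "A = {j. x $ j = x $ i0}" by (auto simp: vec_partition_def)
    then show "x $ i = x $ j" using i j by simp
  qed
qed


lemma local_step:
  fixes M :: "(real^'n::finite) set" and s P :: "real^'n \<Rightarrow> real^'n" and c :: real
  assumes lin_s: "linear s" and lin_P: "linear P" and Ps: "\<And>z. P (s z) = P z"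
    and Pfix: "\<And>z. s z = z \<Longrightarrow> P z = c *\<^sub>R z" and c: "c > 0"
    and man: "C2_submanifold M" and xM: "x \<in> M"
    and sym: "s x = x \<Longrightarrow> \<exists>d>0. s ` (M \<inter> ball x d) \<subseteq> M"
    and appr: "\<And>e. e > 0 \<Longrightarrow> \<exists>a\<in>M. dist a x < e \<and> (\<exists>\<epsilon>>0. M \<inter> ball a \<epsilon> \<subseteq> {z. s z = z})"
  shows "\<exists>\<epsilon>>0. M \<inter> ball x \<epsilon> \<subseteq> {z. s z = z}"
proof -
  let ?W = "{z. s z = z}"
  have bl_s: "bounded_linear s" using lin_s linear_conv_bounded_linear by auto
  have bl_P: "bounded_linear P" using lin_P linear_conv_bounded_linear by auto
  have clW: "closed ?W"
    by (rule closed_Collect_eq[OF linear_continuous_on[OF bl_s] continuous_on_id])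
  have "\<exists>U V \<phi> \<psi> L.
      open U \<and> x \<in> U \<and> open V \<and> subspace L \<and>
      \<phi> ` U = V \<and> \<psi> ` V = U \<and> (\<forall>u\<in>U. \<psi> (\<phi> u) = u) \<and> (\<forall>v\<in>V. \<phi> (\<psi> v) = v) \<and>
      C2_on U \<phi> \<and> C2_on V \<psi> \<and> \<phi> ` (M \<inter> U) = V \<inter> L"
    using man xM unfolding C2_submanifold_def by (rule bspec)
  then obtain U V \<phi> \<psi> L where "open U \<and> x \<in> U \<and> open V \<and> subspace L \<and>
      \<phi> ` U = V \<and> \<psi> ` V = U \<and> (\<forall>u\<in>U. \<psi> (\<phi> u) = u) \<and> (\<forall>v\<in>V. \<phi> (\<psi> v) = v) \<and>
      C2_on U \<phi> \<and> C2_on V \<psi> \<and> \<phi> ` (M \<inter> U) = V \<inter> L"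
    by (elim exE)
  then have ch: "open U" "x \<in> U" "open V" "subspace L"
      "\<phi> ` U = V" "\<psi> ` V = U" "\<forall>u\<in>U. \<psi> (\<phi> u) = u" "\<forall>v\<in>V. \<phi> (\<psi> v) = v"
      "C2_on U \<phi>" "C2_on V \<psi>" "\<phi> ` (M \<inter> U) = V \<inter> L"
    by simp_all
  from ch(9) obtain \<phi>' :: "real^'n \<Rightarrow> ((real^'n) \<Rightarrow>\<^sub>L (real^'n))"
    where d\<phi>: "\<forall>u\<in>U. (\<phi> has_derivative blinfun_apply (\<phi>' u)) (at u)"
    unfolding C2_on_def by blast
  from ch(10) obtain \<psi>' :: "real^'n \<Rightarrow> ((real^'n) \<Rightarrow>\<^sub>L (real^'n))"
    and \<psi>'' :: "real^'n \<Rightarrow> ((real^'n) \<Rightarrow>\<^sub>L ((real^'n) \<Rightarrow>\<^sub>L (real^'n)))"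
    where d\<psi>: "\<forall>v\<in>V. (\<psi> has_derivative blinfun_apply (\<psi>' v)) (at v)"
      and d\<psi>': "\<forall>v\<in>V. (\<psi>' has_derivative blinfun_apply (\<psi>'' v)) (at v)"
    unfolding C2_on_def by blast
  have MUL: "\<psi> v \<in> M \<inter> U" if "v \<in> V \<inter> L" for v
  proof -
    from that ch(11) have "v \<in> \<phi> ` (M \<inter> U)" by simp
    then obtain m where "m \<in> M \<inter> U" "v = \<phi> m" by blast
    then show ?thesis using ch(7) by auto
  qed
  have MinL: "\<phi> m \<in> V \<inter> L" if "m \<in> M \<inter> U" for m
  proof -
    have "\<phi> m \<in> \<phi> ` (M \<inter> U)" by (rule imageI[OF that])
    then show ?thesis by (simp add: ch(11))
  qed
  have cont\<phi>: "isCont \<phi> x" by (rule has_derivative_continuous[OF d\<phi>[rule_format, OF ch(2)]])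
  have cont\<psi>: "isCont \<psi> v" if "v \<in> V" for v by (rule has_derivative_continuous[OF d\<psi>[rule_format, OF that]])
  define v0 where "v0 = \<phi> x"
  have v0V: "v0 \<in> V \<inter> L" unfolding v0_def by (rule MinL) (use xM ch(2) in auto)
  have \<psi>v0: "\<psi> v0 = x" unfolding v0_def using ch(7) ch(2) by simp
  have cont\<psi>': "isCont \<psi>' v0" using v0V by (intro has_derivative_continuous[OF d\<psi>'[rule_format]]) auto
  have xW: "s x = x"
  proof -
    have "\<forall>e>0. \<exists>y\<in>?W. dist y x < e"
    proof (intro allI impI)
      fix e :: real assume "e > 0"
      from appr[OF this] obtain a \<epsilon> where "a \<in> M" "dist a x < e" "\<epsilon> > 0" "M \<inter> ball a \<epsilon> \<subseteq> ?W"
        by blast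
      then show "\<exists>y\<in>?W. dist y x < e" by (intro bexI[of _ a]) auto
    qed
    then show ?thesis using closed_approachable[OF clW, of x] by simp
  qed
  have near: "\<exists>v. dist v v0 < e \<and> (\<forall>l\<in>L. s (\<psi>' v l) = \<psi>' v l)" if e: "e > 0" for e
  proof -
    obtain e1 where e1: "e1 > 0" "ball v0 e1 \<subseteq> V"
      using ch(3) v0V open_contains_ball by blast
    obtain d1 where d1: "d1 > 0" "\<forall>y. dist y x < d1 \<longrightarrow> dist (\<phi> y) (\<phi> x) < min e e1"
      using cont\<phi> e e1(1) unfolding continuous_at_eps_delta by (metis min_less_iff_conj)
    obtain d2 where d2: "d2 > 0" "ball x d2 \<subseteq> U"
      using ch(1,2) open_contains_ball by blast
    obtain a \<epsilon> where a: "a \<in> M" "dist a x < min d1 d2" and \<epsilon>: "\<epsilon> > 0" "M \<inter> ball a \<epsilon> \<subseteq> ?W"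
      using appr[of "min d1 d2"] d1(1) d2(1) by auto
    have aU: "a \<in> U" using a(2) d2(2) by (auto simp: dist_commute)
    define v where "v = \<phi> a"
    have vVL: "v \<in> V \<inter> L" unfolding v_def using MinL a(1) aU by blast
    have \<psi>v: "\<psi> v = a" unfolding v_def using ch(7) aU by simp
    have dv: "dist v v0 < min e e1" unfolding v_def v0_def using d1(2) a(2) by simp
    have "s (\<psi>' v l) = \<psi>' v l" if lL: "l \<in> L" for l
    proof -
      obtain r1 where r1: "r1 > 0" "\<forall>y. dist y v < r1 \<longrightarrow> dist (\<psi> y) (\<psi> v) < \<epsilon>"
        using cont\<psi>[of v] vVL \<epsilon>(1) unfolding continuous_at_eps_delta by blast
      obtain r2 where r2: "r2 > 0" "ball v r2 \<subseteq> V"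
        using ch(3) vVL open_contains_ball by blast
      define r where "r = min r1 r2"
      have r: "r > 0" using r1 r2 r_def by simp
      have zero: "s (\<psi> v') = \<psi> v'" if "v' \<in> L" "dist v' v < r" for v'
      proof -
        have "v' \<in> V" using that r2(2) r_def by (auto simp: dist_commute)
        then have "\<psi> v' \<in> M \<inter> U" using MUL that(1) by blast
        moreover have "dist (\<psi> v') a < \<epsilon>" using r1(2) that(2) r_def \<psi>v by simp
        ultimately have "\<psi> v' \<in> M \<inter> ball a \<epsilon>" by (auto simp: dist_commute)
        then show ?thesis using \<epsilon>(2) by blast
      qed
      define h where "h t = s (\<psi> (v + t *\<^sub>R l)) - \<psi> (v + t *\<^sub>R l)" for t :: real
      have line: "((\<lambda>t::real. v + t *\<^sub>R l) has_derivative (\<lambda>t. t *\<^sub>R l)) (at 0)"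
        by (auto intro!: derivative_eq_intros)
      have d\<psi>v: "(\<psi> has_derivative blinfun_apply (\<psi>' v)) (at (v + 0 *\<^sub>R l))"
        using d\<psi> vVL by simp
      have comp: "((\<lambda>t. \<psi> (v + t *\<^sub>R l)) has_derivative (\<lambda>t. \<psi>' v (t *\<^sub>R l))) (at 0)"
        by (rule has_derivative_compose[OF line d\<psi>v])
      have hd: "(h has_derivative (\<lambda>t. s (\<psi>' v (t *\<^sub>R l)) - \<psi>' v (t *\<^sub>R l))) (at 0)"
        unfolding h_def
        by (intro has_derivative_diff bounded_linear.has_derivative[OF bl_s] comp)
      define \<rho> where "\<rho> = r / (norm l + 1)"
      have nl: "norm l + 1 > 0" using norm_ge_zero[of l] by linarith
      have \<rho>: "\<rho> > 0" unfolding \<rho>_def using r nl by (rule divide_pos_pos)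
      have hz: "(\<lambda>t. 0) t = h t" if "t \<in> ball 0 \<rho>" for t
      proof -
        have "\<bar>t\<bar> < \<rho>" using that by simp
        then have "\<bar>t\<bar> * norm l \<le> \<rho> * norm l"
          by (intro mult_right_mono) auto
        also have "\<rho> * norm l < r" unfolding \<rho>_def using r nl
          by (simp add: field_simps)
        finally have "dist (v + t *\<^sub>R l) v < r" by (simp add: dist_norm)
        moreover have "v + t *\<^sub>R l \<in> L"
          using ch(4) vVL lL by (simp add: subspace_add subspace_scale)
        ultimately show ?thesis unfolding h_def using zero by simp
      qed
      have hd0: "(h has_derivative (\<lambda>t. 0)) (at 0)"
        by (rule has_derivative_transform_within_open[OF has_derivative_const open_ball[of 0 \<rho>] _ hz])
          (use \<rho> in \<open>simp only: centre_in_ball\<close>)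
      have "(\<lambda>t. s (\<psi>' v (t *\<^sub>R l)) - \<psi>' v (t *\<^sub>R l)) = (\<lambda>t. 0)"
        by (rule has_derivative_unique[OF hd hd0])
      from fun_cong[OF this, of 1] show ?thesis by simp
    qed
    then show ?thesis using dv by (intro exI[of _ v]) auto
  qed
  have D: "s (\<psi>' v0 l) = \<psi>' v0 l" if lL: "l \<in> L" for l
  proof (rule ccontr)
    assume ne: "s (\<psi>' v0 l) \<noteq> \<psi>' v0 l"
    define g where "g v = s (\<psi>' v l) - \<psi>' v l" for v
    have c1: "isCont (\<lambda>v. \<psi>' v l) v0"
      by (rule blinfun.continuous[OF cont\<psi>' continuous_const])
    have c2: "isCont (\<lambda>v. s (\<psi>' v l)) v0"
      by (rule isCont_o2[OF c1 linear_continuous_at[OF bl_s]])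
    have cg: "isCont g v0" unfolding g_def by (intro isCont_diff c1 c2)
    have pos: "norm (g v0) > 0" using ne g_def by simp
    obtain d where d: "d > 0" "\<forall>y. dist y v0 < d \<longrightarrow> dist (g y) (g v0) < norm (g v0)"
      using cg pos unfolding continuous_at_eps_delta by blast
    obtain v where v: "dist v v0 < d" "\<forall>l\<in>L. s (\<psi>' v l) = \<psi>' v l"
      using near[OF d(1)] by blast
    have "g v = 0" using v(2) lL g_def by simp
    moreover have "dist (g v) (g v0) < norm (g v0)" using d(2) v(1) by blast
    ultimately show False by simp
  qed
  have Inv: "\<phi>' x (\<psi>' v0 w) = w" for w
  proof -
    have d\<phi>x: "(\<phi> has_derivative blinfun_apply (\<phi>' x)) (at (\<psi> v0))"
      using d\<phi> ch(2) \<psi>v0 by simp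
    have d\<psi>v0: "(\<psi> has_derivative blinfun_apply (\<psi>' v0)) (at v0)" using d\<psi> v0V by simp
    have A: "((\<phi> \<circ> \<psi>) has_derivative (blinfun_apply (\<phi>' x) \<circ> blinfun_apply (\<psi>' v0))) (at v0)"
      by (rule diff_chain_at[OF d\<psi>v0 d\<phi>x])
    have B: "((\<phi> \<circ> \<psi>) has_derivative (\<lambda>x. x)) (at v0)"
      by (rule has_derivative_transform_within_open[OF has_derivative_ident ch(3)])
        (use v0V ch(8) in auto)
    from has_derivative_unique[OF A B] show ?thesis by (metis comp_apply)
  qed
  define B where "B = norm (\<phi>' x) + 1"
  have Bpos: "B > 0" unfolding B_def using norm_ge_zero[of "\<phi>' x"] by linarith
  have lowb: "norm w \<le> B * norm (\<psi>' v0 w)" for w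
  proof -
    have "norm w = norm (\<phi>' x (\<psi>' v0 w))" using Inv by simp
    also have "\<dots> \<le> norm (\<phi>' x) * norm (\<psi>' v0 w)" by (rule norm_blinfun)
    also have "\<dots> \<le> B * norm (\<psi>' v0 w)" unfolding B_def by (simp add: mult_right_mono)
    finally show ?thesis .
  qed
  define \<eta> where "\<eta> = c / (2 * B * (onorm P + 1))"
  have oP: "onorm P \<ge> 0" by (rule onorm_pos_le[OF bl_P])
  have \<eta>: "\<eta> > 0" unfolding \<eta>_def using c Bpos oP by (simp add: add_nonneg_pos)
  obtain r0 where r0: "r0 > 0" "\<forall>v. dist v v0 < r0 \<longrightarrow> dist (\<psi>' v) (\<psi>' v0) < \<eta>"
    using cont\<psi>' \<eta> unfolding continuous_at_eps_delta by blast
  obtain r1 where r1: "r1 > 0" "ball v0 r1 \<subseteq> V" using ch(3) v0V open_contains_ball by blast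
  define r where "r = min r0 r1"
  have r: "r > 0" "ball v0 r \<subseteq> V" using r0 r1 r_def by auto
  have Inj: "a = b" if ab: "a \<in> L" "b \<in> L" "a \<in> ball v0 r" "b \<in> ball v0 r" "P (\<psi> a) = P (\<psi> b)" for a b
  proof -
    let ?f = "\<lambda>v. P (\<psi> v)"
    let ?f' = "\<lambda>v w. P (\<psi>' v w)"
    have seg: "a + t *\<^sub>R (b - a) \<in> ball v0 r" if "t \<in> {0..1}" for t
    proof -
      have "(1 - t) *\<^sub>R a + t *\<^sub>R b \<in> ball v0 r"
        using convex_ball[of v0 r] ab(3,4) that unfolding convex_alt by auto
      moreover have "(1 - t) *\<^sub>R a + t *\<^sub>R b = a + t *\<^sub>R (b - a)" by (simp add: algebra_simps)
      ultimately show ?thesis by simp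
    qed
    have der: "(?f has_derivative ?f' y) (at y within ball v0 r)" if "y \<in> ball v0 r" for y
    proof -
      have "y \<in> V" using that r(2) by blast
      then have "(\<psi> has_derivative blinfun_apply (\<psi>' y)) (at y)" using d\<psi> by simp
      then have "(?f has_derivative ?f' y) (at y)"
        by (rule bounded_linear.has_derivative[OF bl_P])
      then show ?thesis by (rule has_derivative_at_withinI)
    qed
    have onb: "onorm (?f' y - ?f' v0) \<le> c / (2 * B)" if "y \<in> ball v0 r" for y
    proof -
      have eq: "?f' y - ?f' v0 = P \<circ> blinfun_apply (\<psi>' y - \<psi>' v0)"
        by (rule ext) (simp add: blinfun.diff_left linear_diff[OF lin_P])
      have "onorm (?f' y - ?f' v0) \<le> onorm P * onorm (blinfun_apply (\<psi>' y - \<psi>' v0))"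
        unfolding eq by (rule onorm_compose[OF bl_P blinfun.bounded_linear_right])
      also have "onorm (blinfun_apply (\<psi>' y - \<psi>' v0)) = norm (\<psi>' y - \<psi>' v0)"
        by (simp add: norm_blinfun.rep_eq)
      also have "norm (\<psi>' y - \<psi>' v0) \<le> \<eta>"
      proof -
        have "dist y v0 < r0" using that r_def by (simp add: dist_commute)
        then have "dist (\<psi>' y) (\<psi>' v0) < \<eta>" using r0(2) by blast
        then show ?thesis by (simp add: dist_norm)
      qed
      then have "onorm P * norm (\<psi>' y - \<psi>' v0) \<le> onorm P * \<eta>"
        by (rule mult_left_mono) (rule oP)
      also have "onorm P * \<eta> \<le> (onorm P + 1) * \<eta>" using \<eta> by simp
      also have "(onorm P + 1) * \<eta> = c / (2 * B)"
      proof -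
        have "onorm P + 1 \<noteq> 0" using oP by linarith
        then show ?thesis unfolding \<eta>_def by simp
      qed
      finally show ?thesis .
    qed
    have v0S: "v0 \<in> ball v0 r" using r(1) by simp
    have lin: "norm (?f b - ?f a - ?f' v0 (b - a)) \<le> norm (b - a) * (c / (2 * B))"
      by (rule differentiable_bound_linearization[OF seg der onb v0S])
    have bal: "b - a \<in> L" using ch(4) ab(1,2) by (simp add: subspace_diff)
    then have "s (\<psi>' v0 (b - a)) = \<psi>' v0 (b - a)" by (rule D)
    then have "P (\<psi>' v0 (b - a)) = c *\<^sub>R \<psi>' v0 (b - a)" by (rule Pfix)
    with lin ab(5) have "c * norm (\<psi>' v0 (b - a)) \<le> norm (b - a) * (c / (2 * B))"
      using c by simp
    then have "c * (B * norm (\<psi>' v0 (b - a))) \<le> norm (b - a) * (c / 2)"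
      using Bpos by (simp add: field_simps)
    moreover have "c * norm (b - a) \<le> c * (B * norm (\<psi>' v0 (b - a)))"
      using lowb c by (simp add: mult_left_mono)
    ultimately have "c * norm (b - a) \<le> norm (b - a) * (c / 2)" by linarith
    then have "norm (b - a) \<le> 0" using c by (simp add: field_simps)
    then show ?thesis by simp
  qed
  obtain d where d: "d > 0" "s ` (M \<inter> ball x d) \<subseteq> M" using sym xW by blast
  obtain d1 where d1: "d1 > 0" "\<forall>y. dist y x < d1 \<longrightarrow> dist (\<phi> y) (\<phi> x) < r"
    using cont\<phi> r(1) unfolding continuous_at_eps_delta by blast
  obtain d2 where d2: "d2 > 0" "ball x d2 \<subseteq> U" using ch(1,2) open_contains_ball by blast
  have conts: "isCont s x" by (rule linear_continuous_at[OF bl_s])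
  obtain d3 where d3: "d3 > 0" "\<forall>y. dist y x < d3 \<longrightarrow> dist (s y) (s x) < min d1 d2"
    using conts d1(1) d2(1) unfolding continuous_at_eps_delta by (metis min_less_iff_conj)
  define \<epsilon> where "\<epsilon> = min (min d d1) (min d2 d3)"
  have \<epsilon>: "\<epsilon> > 0" using d d1 d2 d3 \<epsilon>_def by simp
  have "M \<inter> ball x \<epsilon> \<subseteq> ?W"
  proof
    fix z assume z: "z \<in> M \<inter> ball x \<epsilon>"
    have zx: "dist z x < \<epsilon>" using z by (simp add: dist_commute)
    have zU: "z \<in> U" using zx d2(2) \<epsilon>_def by (auto simp: dist_commute)
    have szM: "s z \<in> M" using d(2) z \<epsilon>_def by auto
    have szx: "dist (s z) x < min d1 d2" using d3(2) zx \<epsilon>_def xW by fastforce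
    have szU: "s z \<in> U" using szx d2(2) by (auto simp: dist_commute)
    define a where "a = \<phi> z"
    define b where "b = \<phi> (s z)"
    have aL: "a \<in> L" unfolding a_def using MinL z zU by blast
    have bL: "b \<in> L" unfolding b_def using MinL szM szU by blast
    have "dist z x < d1" using zx \<epsilon>_def by simp
    then have "dist (\<phi> z) (\<phi> x) < r" using d1(2) by blast
    then have aB: "a \<in> ball v0 r" unfolding a_def v0_def by (simp add: dist_commute)
    have "dist (s z) x < d1" using szx by simp
    then have "dist (\<phi> (s z)) (\<phi> x) < r" using d1(2) by blast
    then have bB: "b \<in> ball v0 r" unfolding b_def v0_def by (simp add: dist_commute)
    have \<psi>a: "\<psi> a = z" unfolding a_def using ch(7) zU by simp
    have \<psi>b: "\<psi> b = s z" unfolding b_def using ch(7) szU by simp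
    have "P (\<psi> a) = P (\<psi> b)" using \<psi>a \<psi>b Ps by simp
    then have "a = b" using Inj aL bL aB bB by blast
    then have "z = s z" using \<psi>a \<psi>b by simp
    then show "z \<in> ?W" by simp
  qed
  then show ?thesis using \<epsilon> by blast
qed


lemma linear_funpow:
  fixes f :: "'a::real_vector \<Rightarrow> 'a"
  assumes "linear f" shows "linear (f ^^ n)"
proof (induction n)
  case 0 show ?case by (simp add: linear_iff)
next
  case (Suc n) show ?case using linear_compose[OF Suc.IH assms] by (simp only: funpow.simps(2))
qed

theorem corollary3p18:
  fixes M :: "(real^'n::{finite,linorder}) set"
    and xbar :: "real^('n::{finite,linorder})" and \<sigma> :: "'n::{finite,linorder} \<Rightarrow> 'n" and \<delta> :: real
  assumes "locally_symmetric_C2_submanifold M"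
    and "xbar \<in> M" and "\<sigma> permutes UNIV" and "\<delta> > 0"
    and "M \<inter> ball xbar \<delta> \<subseteq> Delta \<sigma>"
  shows "M \<subseteq> Delta_perp_perp \<sigma>"
proof -
  note hyp = assms
  define s where "s = perm_act \<sigma>"
  have lin_s: "linear s" unfolding s_def by (rule perm_act_linear)
  obtain k where k: "k > 0" "s ^^ k = id" using perm_act_nilpotent[OF hyp(3)] s_def by blast
  define P where "P z = (\<Sum>i<k. (s ^^ i) z)" for z
  have linP: "linear P"
  proof (rule linearI)
    fix x y and c :: real
    show "P (x + y) = P x + P y"
      unfolding P_def by (simp add: linear_add[OF linear_funpow[OF lin_s]] sum.distrib)
    show "P (c *\<^sub>R x) = c *\<^sub>R P x"
      unfolding P_def by (simp add: linear_cmul[OF linear_funpow[OF lin_s]] scaleR_sum_right)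
  qed
  have Ps: "P (s z) = P z" for z
  proof -
    have "P (s z) = (\<Sum>i<k. (s ^^ Suc i) z)"
      unfolding P_def by (simp only: funpow_Suc_right o_apply)
    also have "\<dots> + (s ^^ 0) z = (\<Sum>i<Suc k. (s ^^ i) z)"
      by (simp only: sum.lessThan_Suc_shift add.commute)
    also have "\<dots> = P z + (s ^^ k) z" unfolding P_def by simp
    finally show ?thesis using k(2) by simp
  qed
  have Pfix: "P z = real k *\<^sub>R z" if "s z = z" for z
  proof -
    have "(s ^^ i) z = z" for i by (induction i) (simp_all add: that)
    then have "P z = (\<Sum>i<k. z)" unfolding P_def by simp
    also have "\<dots> = real k *\<^sub>R z" by (simp only: sum_constant_scaleR card_lessThan)
    finally show ?thesis .
  qed
  have M: "connected M" "C2_submanifold M" "locally_symmetric M"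
    using hyp(1) unfolding locally_symmetric_C2_submanifold_def by auto
  have sym: "\<exists>d>0. s ` (M \<inter> ball x d) \<subseteq> M" if "x \<in> M" "s x = x" for x
  proof -
    from M(3) that(1) obtain d where d: "d > 0"
      "\<forall>y\<in>M \<inter> ball x d. \<forall>\<tau>. \<tau> permutes UNIV \<and> perm_act \<tau> y = y \<longrightarrow>
        perm_act \<tau> ` (M \<inter> ball x d) = M \<inter> ball x d"
      unfolding locally_symmetric_def by blast
    have "x \<in> M \<inter> ball x d" using that(1) d(1) by simp
    then have "perm_act \<sigma> ` (M \<inter> ball x d) = M \<inter> ball x d"
      using d(2) hyp(3) that(2) s_def by blast
    then show ?thesis using d(1) s_def by auto
  qed
  let ?W = "{z. s z = z}"
  define A where "A = {x\<in>M. \<exists>\<epsilon>>0. M \<inter> ball x \<epsilon> \<subseteq> ?W}"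
  have WD: "?W = Delta_perp_perp \<sigma>" using Dpp_char[OF hyp(3)] s_def by auto
  have xbarA: "xbar \<in> A"
    unfolding A_def using hyp(2,4,5) Delta_sub[OF hyp(3)] WD by blast
  have oA: "openin (top_of_set M) A"
    unfolding openin_contains_ball
  proof (intro conjI ballI)
    show "A \<subseteq> M" unfolding A_def by blast
    fix x assume "x \<in> A"
    then obtain \<epsilon> where \<epsilon>: "\<epsilon> > 0" "M \<inter> ball x \<epsilon> \<subseteq> ?W" and xM: "x \<in> M" unfolding A_def by blast
    have "ball x \<epsilon> \<inter> M \<subseteq> A"
    proof
      fix y assume y: "y \<in> ball x \<epsilon> \<inter> M"
      define e where "e = \<epsilon> - dist x y"
      have e: "e > 0" using y e_def by simp
      have "ball y e \<subseteq> ball x \<epsilon>" unfolding e_def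
        by (rule ball_subset_ball_iff[THEN iffD2]) (simp add: dist_commute)
      then have "M \<inter> ball y e \<subseteq> ?W" using \<epsilon>(2) by blast
      then show "y \<in> A" unfolding A_def using y e by blast
    qed
    then show "\<exists>\<epsilon>>0. ball x \<epsilon> \<inter> M \<subseteq> A" using \<epsilon>(1) by blast
  qed
  have oB: "openin (top_of_set M) (M - A)"
    unfolding openin_contains_ball
  proof (intro conjI ballI)
    show "M - A \<subseteq> M" by blast
    fix y assume y: "y \<in> M - A"
    have "\<not> (\<forall>e>0. \<exists>a\<in>M. dist a y < e \<and> (\<exists>\<epsilon>>0. M \<inter> ball a \<epsilon> \<subseteq> ?W))"
    proof
      assume appr: "\<forall>e>0. \<exists>a\<in>M. dist a y < e \<and> (\<exists>\<epsilon>>0. M \<inter> ball a \<epsilon> \<subseteq> ?W)"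
      have "\<exists>\<epsilon>>0. M \<inter> ball y \<epsilon> \<subseteq> ?W"
      proof (rule local_step[OF lin_s linP Ps Pfix _ M(2)])
        show "0 < real k" using k(1) by simp
        show "y \<in> M" using y by blast
        show "s y = y \<Longrightarrow> \<exists>d>0. s ` (M \<inter> ball y d) \<subseteq> M" using sym y by blast
        show "\<And>e. e > 0 \<Longrightarrow> \<exists>a\<in>M. dist a y < e \<and> (\<exists>\<epsilon>>0. M \<inter> ball a \<epsilon> \<subseteq> ?W)"
          using appr by blast
      qed
      then show False using y unfolding A_def by blast
    qed
    then obtain e where e: "e > 0" "\<forall>a\<in>M. dist a y < e \<longrightarrow> \<not> (\<exists>\<epsilon>>0. M \<inter> ball a \<epsilon> \<subseteq> ?W)"
      by blast
    have "ball y e \<inter> M \<subseteq> M - A"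
      using e(2) unfolding A_def by (auto simp: dist_commute)
    then show "\<exists>\<epsilon>>0. ball y \<epsilon> \<inter> M \<subseteq> M - A" using e(1) by blast
  qed
  have "M - A = {}"
  proof (rule ccontr)
    assume ne: "M - A \<noteq> {}"
    have "\<exists>E1 E2. openin (top_of_set M) E1 \<and> openin (top_of_set M) E2 \<and>
        M \<subseteq> E1 \<union> E2 \<and> E1 \<inter> E2 = {} \<and> E1 \<noteq> {} \<and> E2 \<noteq> {}"
      using oA oB ne xbarA by (intro exI[of _ A] exI[of _ "M - A"]) blast
    then show False using M(1) unfolding connected_openin by blast
  qed
  then have "M \<subseteq> A" by blast
  also have "A \<subseteq> ?W"
  proof
    fix x assume "x \<in> A"
    then obtain \<epsilon> where "\<epsilon> > 0" "M \<inter> ball x \<epsilon> \<subseteq> ?W" "x \<in> M" unfolding A_def by blast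
    then show "x \<in> ?W" by auto
  qed
  finally show ?thesis using WD by simp
qed

end
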